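(* Let $k\ge 2$ and $l\ge 1$ be integers. If there exists an abelian-$k$th-power-free infinite word over an alphabet of $l$ letters, then for every alphabet $\Sigma$ with $|\Sigma|=2l-1$ and every antimorphic involution $\theta$ on $\Sigma^*$, there exists an infinite word over $\Sigma$ that is pseudo-$k$th-power-free with respect to $\theta$.
   Context: For a word $w$ and letter $a$, $|w|_a$ is the number of occurrences of $a$ in $w$. A nonempty word $w$ is an abelian $k$th power if $w=u_1\cdots u_k$ with $|u_i|_a=|u_j|_a$ for all letters $a$ and all $1\le i,j\le k$; a word is abelian-$k$th-power-free if none of its factors (contiguous subwords) is an abelian $k$th power. A function $\theta:\Sigma^*\to\Sigma^*$ is an antimorphic involution if $\theta(uv)=\theta(v)\theta(u)$ and $\theta(\theta(w))=w$. A nonempty word $w$ is a pseudo $k$th power with respect to $\theta$ if $w=u_1\cdots u_k$ where for all $1\le i,j\le k$, $u_i=u_j$ or $u_i=\theta(u_j)$; a word is pseudo-$k$th-power-free if no factor of it is a pseudo $k$th power. *)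

theory Defs
  imports Main
begin

definition factor :: "(nat \<Rightarrow> 'a) \<Rightarrow> nat \<Rightarrow> nat \<Rightarrow> 'a list" where
  "factor x i j = map x [i..<j]"

definition abelian_power :: "nat \<Rightarrow> 'a list \<Rightarrow> bool" where
  "abelian_power k w \<longleftrightarrow> w \<noteq> [] \<and>
     (\<exists>us. length us = k \<and> concat us = w \<and>
        (\<forall>i<k. \<forall>j<k. \<forall>a. count_list (us ! i) a = count_list (us ! j) a))"

definition abelian_power_free_inf :: "nat \<Rightarrow> (nat \<Rightarrow> 'a) \<Rightarrow> bool" where
  "abelian_power_free_inf k x \<longleftrightarrow> (\<forall>i j. i < j \<longrightarrow> \<not> abelian_power k (factor x i j))"

definition antimorphic_involution :: "'a set \<Rightarrow> ('a list \<Rightarrow> 'a list) \<Rightarrow> bool" where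
  "antimorphic_involution S \<theta> \<longleftrightarrow>
     (\<forall>w\<in>lists S. \<theta> w \<in> lists S) \<and>
     (\<forall>u\<in>lists S. \<forall>v\<in>lists S. \<theta> (u @ v) = \<theta> v @ \<theta> u) \<and>
     (\<forall>w\<in>lists S. \<theta> (\<theta> w) = w)"

definition pseudo_power :: "('a list \<Rightarrow> 'a list) \<Rightarrow> nat \<Rightarrow> 'a list \<Rightarrow> bool" where
  "pseudo_power \<theta> k w \<longleftrightarrow> w \<noteq> [] \<and>
     (\<exists>us. length us = k \<and> concat us = w \<and>
        (\<forall>i<k. \<forall>j<k. us ! i = us ! j \<or> us ! i = \<theta> (us ! j)))"

definition pseudo_power_free_inf :: "('a list \<Rightarrow> 'a list) \<Rightarrow> nat \<Rightarrow> (nat \<Rightarrow> 'a) \<Rightarrow> bool" where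
  "pseudo_power_free_inf \<theta> k x \<longleftrightarrow> (\<forall>i j. i < j \<longrightarrow> \<not> pseudo_power \<theta> k (factor x i j))"

end

theory Submission
  imports Defs "HOL-Library.Multiset"
begin

lemma theta_nil:
  assumes "antimorphic_involution S \<theta>"
  shows "\<theta> [] = []"
proof -
  have "\<theta> ([]@[]) = \<theta> [] @ \<theta> []" using assms unfolding antimorphic_involution_def
    by (metis lists.Nil)
  hence "length (\<theta> []) = 2 * length (\<theta> [])" by simp
  thus ?thesis by simp
qed

lemma theta_len:
  assumes A: "antimorphic_involution S \<theta>"
  shows "w \<in> lists S \<Longrightarrow> length (\<theta> w) \<ge> length w"
proof (induction w)
  case Nil then show ?case by simp
next
  case (Cons a w)
  have ne: "\<theta> [a] \<noteq> []"
  proof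
    assume "\<theta> [a] = []"
    hence "\<theta> (\<theta> [a]) = []" using theta_nil[OF A] by simp
    moreover have "\<theta> (\<theta> [a]) = [a]" using A Cons.prems unfolding antimorphic_involution_def by auto
    ultimately show False by simp
  qed
  have "\<theta> ([a] @ w) = \<theta> w @ \<theta> [a]" using A Cons.prems unfolding antimorphic_involution_def
    by (metis lists.Nil lists.Cons listsE)
  then show ?case using Cons ne by (cases "\<theta> [a]") auto
qed

lemma theta_single:
  assumes A: "antimorphic_involution S \<theta>" and a: "a \<in> S"
  shows "\<theta> [a] = [hd (\<theta> [a])] \<and> hd (\<theta> [a]) \<in> S"
proof -
  have in1: "\<theta> [a] \<in> lists S" using A a unfolding antimorphic_involution_def by auto
  have "length (\<theta> (\<theta> [a])) \<ge> length (\<theta> [a])" using theta_len[OF A in1] .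
  moreover have "\<theta> (\<theta> [a]) = [a]" using A a unfolding antimorphic_involution_def by auto
  moreover have "length (\<theta> [a]) \<ge> 1" using theta_len[OF A, of "[a]"] a by simp
  ultimately have "length (\<theta> [a]) = 1" by simp
  then show ?thesis using in1 by (cases "\<theta> [a]") auto
qed

lemma theta_rev:
  assumes A: "antimorphic_involution S \<theta>"
  shows "w \<in> lists S \<Longrightarrow> \<theta> w = rev (map (\<lambda>a. hd (\<theta> [a])) w)"
proof (induction w)
  case Nil then show ?case using theta_nil[OF A] by simp
next
  case (Cons a w)
  have "\<theta> ([a] @ w) = \<theta> w @ \<theta> [a]" using A Cons.prems unfolding antimorphic_involution_def
    by (metis lists.Nil lists.Cons listsE)
  then show ?case using Cons theta_single[OF A, of a] by simp
qed

theorem mainTheorem13: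
  fixes k l :: nat
  assumes "k \<ge> 2" and "l \<ge> 1"
    and "\<exists>w :: nat \<Rightarrow> nat. (\<forall>n. w n < l) \<and> abelian_power_free_inf k w"
  shows "\<forall>(\<Sigma> :: 'a set) \<theta>. finite \<Sigma> \<and> card \<Sigma> = 2 * l - 1 \<and> antimorphic_involution \<Sigma> \<theta> \<longrightarrow>
           (\<exists>x :: nat \<Rightarrow> 'a. (\<forall>n. x n \<in> \<Sigma>) \<and> pseudo_power_free_inf \<theta> k x)"
proof (intro allI impI)
  fix \<Sigma> :: "'a set" and \<theta>
  assume H: "finite \<Sigma> \<and> card \<Sigma> = 2 * l - 1 \<and> antimorphic_involution \<Sigma> \<theta>"
  hence fin: "finite \<Sigma>" and cd: "card \<Sigma> = 2 * l - 1" and A: "antimorphic_involution \<Sigma> \<theta>" by auto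
  obtain w :: "nat \<Rightarrow> nat" where wl: "\<forall>n. w n < l" and wf: "abelian_power_free_inf k w"
    using assms(3) by blast
  define t where "t a = hd (\<theta> [a])" for a
  have tS: "a \<in> \<Sigma> \<Longrightarrow> t a \<in> \<Sigma>" for a using theta_single[OF A] unfolding t_def by blast
  have tt: "a \<in> \<Sigma> \<Longrightarrow> t (t a) = a" for a
  proof -
    assume a: "a \<in> \<Sigma>"
    have e: "\<theta> [a] = [t a]" using theta_single[OF A a] unfolding t_def by blast
    have "\<theta> (\<theta> [a]) = [a]" using A a unfolding antimorphic_involution_def by auto
    hence "\<theta> [t a] = [a]" using e by simp
    thus ?thesis unfolding t_def by simp
  qed
  have trev: "u \<in> lists \<Sigma> \<Longrightarrow> \<theta> u = rev (map t u)" for u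
    using theta_rev[OF A] unfolding t_def by blast
  define Ob where "Ob a = {a, t a}" for a
  define r where "r a = (SOME b. b \<in> Ob a)" for a
  have rO: "r a \<in> Ob a" for a unfolding r_def Ob_def by (rule someI) auto
  have Orb: "b \<in> \<Sigma> \<Longrightarrow> Ob (r b) = Ob b" for b
    using rO[of b] tt[of b] unfolding Ob_def by auto
  have rr: "b \<in> \<Sigma> \<Longrightarrow> r (r b) = r b" for b
  proof -
    assume b: "b \<in> \<Sigma>"
    have "r (r b) = (SOME c. c \<in> Ob (r b))" by (rule r_def)
    also have "\<dots> = (SOME c. c \<in> Ob b)" using Orb[OF b] by simp
    also have "\<dots> = r b" by (rule r_def[symmetric])
    finally show ?thesis .
  qed
  define S where "S = r ` \<Sigma>"
  have rS: "b \<in> \<Sigma> \<Longrightarrow> r b \<in> \<Sigma>" for b using rO[of b] tS[of b] unfolding Ob_def by auto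
  have SS: "S \<subseteq> \<Sigma>" unfolding S_def using rS by auto
  have Sfix: "a \<in> S \<Longrightarrow> t a \<in> S \<Longrightarrow> t a = a" for a
  proof -
    assume a: "a \<in> S" and ta: "t a \<in> S"
    obtain b where b: "b \<in> \<Sigma>" "a = r b" using a unfolding S_def by auto
    obtain c where c: "c \<in> \<Sigma>" "t a = r c" using ta unfolding S_def by auto
    have ra: "r a = a" using rr b by simp
    have rta: "r (t a) = t a" using rr c by simp
    have "Ob (t a) = Ob a" using tt[of a] SS a unfolding Ob_def by auto
    hence "r (t a) = r a" unfolding r_def by simp
    thus ?thesis using ra rta by simp
  qed
  have cov: "\<Sigma> \<subseteq> S \<union> t ` S"
  proof
    fix a assume a: "a \<in> \<Sigma>"
    have "r a \<in> {a, t a}" using rO[of a] unfolding Ob_def .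
    then consider "r a = a" | "r a = t a" by blast
    then show "a \<in> S \<union> t ` S"
    proof cases
      case 1 thus ?thesis using a unfolding S_def by force
    next
      case 2 hence "t (r a) = a" using tt a by simp
      thus ?thesis using a unfolding S_def by force
    qed
  qed
  have finS: "finite S" using SS fin finite_subset by blast
  have "card \<Sigma> \<le> card (S \<union> t ` S)" using cov finS by (intro card_mono) auto
  also have "\<dots> \<le> card S + card (t ` S)" by (rule card_Un_le)
  also have "\<dots> \<le> 2 * card S" using card_image_le[OF finS, of t] by simp
  finally have "l \<le> card S" using cd assms(2) by simp
  then obtain S' where S': "S' \<subseteq> S" "card S' = l" using obtain_subset_with_card_n by metis
  have finS': "finite S'" using S' finS finite_subset by blast
  obtain f where f: "bij_betw f {0..<l} S'" using ex_bij_betw_nat_finite[OF finS'] S' by auto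
  define g where "g = inv_into {0..<l} f"
  have gf: "n < l \<Longrightarrow> g (f n) = n" for n
    unfolding g_def using f bij_betw_inv_into_left by fastforce
  have fS: "n < l \<Longrightarrow> f n \<in> S'" for n using f bij_betwE by fastforce
  define x where "x n = f (w n)" for n
  show "\<exists>x :: nat \<Rightarrow> 'a. (\<forall>n. x n \<in> \<Sigma>) \<and> pseudo_power_free_inf \<theta> k x"
  proof (intro exI conjI allI)
    fix n show "x n \<in> \<Sigma>" using fS wl S' SS unfolding x_def by blast
  next
    show "pseudo_power_free_inf \<theta> k x"
      unfolding pseudo_power_free_inf_def
    proof (intro allI impI notI)
      fix i j :: nat assume ij: "i < j" and pp: "pseudo_power \<theta> k (factor x i j)"
      obtain us where us: "length us = k" "concat us = factor x i j"
        "\<forall>p<k. \<forall>q<k. us ! p = us ! q \<or> us ! p = \<theta> (us ! q)"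
        using pp unfolding pseudo_power_def by blast
      have fx: "factor x i j = map f (factor w i j)" unfolding factor_def x_def by simp
      have usS: "p < k \<Longrightarrow> us ! p \<in> lists S'" for p
      proof -
        assume p: "p < k"
        have "set (us ! p) \<subseteq> set (concat us)" proof -
          have "us ! p \<in> set us" using p us(1) by simp
          thus ?thesis by auto
        qed
        moreover have "set (concat us) \<subseteq> S'" using us(2) fx fS wl
          unfolding factor_def by auto
        ultimately show ?thesis by auto
      qed
      have ms: "mset (us ! p) = mset (us ! q)" if p: "p < k" and q: "q < k" for p q
      proof -
        from us(3) p q consider "us ! p = us ! q" | "us ! p = \<theta> (us ! q)" by blast
        then show ?thesis
        proof cases
          case 1 then show ?thesis by simp
        next
          case 2
          have uq: "us ! q \<in> lists S" using usS[OF q] S' by auto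
          have up: "us ! p \<in> lists S" using usS[OF p] S' by auto
          have e: "us ! p = rev (map t (us ! q))" 
          proof -
            have "us ! q \<in> lists \<Sigma>" using uq SS lists_mono by blast
            thus ?thesis using 2 trev by simp
          qed
          have "map t (us ! q) = us ! q"
          proof (rule map_idI)
            fix a assume a: "a \<in> set (us ! q)"
            have "t a \<in> set (us ! p)" using e a by simp
            hence "t a \<in> S" using up by auto
            moreover have "a \<in> S" using uq a by auto
            ultimately show "t a = a" using Sfix by blast
          qed
          then show ?thesis using e by simp
        qed
      qed
      define vs where "vs = map (map g) us"
      have "abelian_power k (factor w i j)"
        unfolding abelian_power_def
      proof (intro conjI exI)
        show "factor w i j \<noteq> []" using ij unfolding factor_def by simp
        show "length vs = k" using us(1) unfolding vs_def by simp
        have "concat vs = map g (concat us)" unfolding vs_def by (simp add: map_concat)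
        also have "\<dots> = map g (map f (factor w i j))" using us(2) fx by simp
        also have "\<dots> = factor w i j" using gf wl unfolding factor_def by (simp add: map_idI)
        finally show "concat vs = factor w i j" .
        show "\<forall>p<k. \<forall>q<k. \<forall>a. count_list (vs ! p) a = count_list (vs ! q) a"
        proof (intro allI impI)
          fix p q a assume p: "p < k" and q: "q < k"
          have "mset (vs ! p) = mset (vs ! q)" using ms[OF p q] p q us(1)
            unfolding vs_def by simp
          then show "count_list (vs ! p) a = count_list (vs ! q) a"
            by (metis count_mset)
        qed
      qed
      then show False using wf ij unfolding abelian_power_free_inf_def by blast
    qed
  qed
qed

end
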